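(* Let $0<a<1$, $\alpha\in(0,1]$ and $b=a^{1/\alpha}$. Let $\{X(t),t\ge 0\}$ be a Lévy process taking values in $I_0=\{0,1,2,\dots\}$. Then $\{X(t)\}$ is $I_0$-valued $(a,\tfrac{1}{\alpha})$-semi-selfsimilar if and only if the distribution of $X(1)$ is $I_0$-valued (discrete) semi-stable$(a,b)$.
   Context: A Lévy process is a process with stationary and independent increments and $X(0)=0$; if $P(s)$ is the probability generating function (PGF) of $X(1)$ then the PGF of $X(t)$ is $P(s)^t$. Binomial thinning: for $0<c<1$ and an $I_0$-valued random variable $X$, $c\otimes X=\sum_{i=1}^{X} Z_i$, where $\{Z_i\}$ are i.i.d. Bernoulli variables independent of $X$ with $P\{Z_i=1\}=c$; if $X$ has PGF $P(s)$ then $c\otimes X$ has PGF $P(1-c+cs)$. An $I_0$-valued process $\{X(t),t\ge0\}$ is $(a,H)$-semi-selfsimilar (SSS), with $0<a<1$ and $H>0$, if $\{X(at)\}\overset{d}{=}\{a^H\otimes X(t)\}$ (the thinning applied to $X(t)$ with a Bernoulli sequence independent of the process). An $I_0$-valued random variable with PGF $P(s)$ is discrete semi-stable$(a,b)$ if $P(s)\neq 0$ and $\{P(s)\}^a=P(1-b+bs)$ for all $0\le s\le 1$, where $0<b<1$ and $b=a^{1/\alpha}$ for some $\alpha\in(0,1]$. Semi-stability and semi-selfsimilarity are meant in the strict sense. *)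

theory Defs
  imports "HOL-Probability.Probability"
begin

fun bern_list :: "real \<Rightarrow> nat \<Rightarrow> bool list pmf" where
  "bern_list c 0 = return_pmf []"
| "bern_list c (Suc n) =
     bind_pmf (bernoulli_pmf c) (\<lambda>z. map_pmf (Cons z) (bern_list c n))"

text \<open>Joint law of the binomial thinnings (c \<otimes> x_1, ..., c \<otimes> x_k) of given values
  x_1, ..., x_k, all using ONE common Bernoulli(c) sequence Z_1, Z_2, ...:
  c \<otimes> x = Z_1 + ... + Z_x.\<close>
definition thin_vec :: "real \<Rightarrow> nat list \<Rightarrow> nat list pmf" where
  "thin_vec c xs =
     map_pmf (\<lambda>zs. map (\<lambda>x. length (filter id (take x zs))) xs)
             (bern_list c (if xs = [] then 0 else Max (set xs)))"

definition fdd :: "'a measure \<Rightarrow> (real \<Rightarrow> 'a \<Rightarrow> nat) \<Rightarrow> real list \<Rightarrow> nat list measure" where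
  "fdd M X ts = distr M (count_space UNIV) (\<lambda>\<omega>. map (\<lambda>t. X t \<omega>) ts)"

definition levy_process :: "'a measure \<Rightarrow> (real \<Rightarrow> 'a \<Rightarrow> nat) \<Rightarrow> bool" where
  "levy_process M X \<longleftrightarrow>
     (\<forall>t\<ge>0. X t \<in> M \<rightarrow>\<^sub>M count_space UNIV) \<and>
     (AE \<omega> in M. X 0 \<omega> = 0) \<and>
     (\<forall>s t. 0 \<le> s \<longrightarrow> s \<le> t \<longrightarrow>
        distr M (count_space UNIV) (\<lambda>\<omega>. int (X t \<omega>) - int (X s \<omega>)) =
        distr M (count_space UNIV) (\<lambda>\<omega>. int (X (t - s) \<omega>))) \<and>
     (\<forall>(n::nat) (\<tau>::nat \<Rightarrow> real). 0 \<le> \<tau> 0 \<longrightarrow> (\<forall>i<n. \<tau> i < \<tau> (Suc i)) \<longrightarrow>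
        prob_space.indep_vars M (\<lambda>_. count_space UNIV)
          (\<lambda>i \<omega>. int (X (\<tau> (Suc i)) \<omega>) - int (X (\<tau> i) \<omega>)) {..<n})"

text \<open>(a,H)-semi-selfsimilarity: {X(at)} =d {a^H \<otimes> X(t)} (equality of all
  finite-dimensional distributions; the thinning uses a Bernoulli sequence
  independent of the process).\<close>
definition semi_selfsimilar :: "'a measure \<Rightarrow> (real \<Rightarrow> 'a \<Rightarrow> nat) \<Rightarrow> real \<Rightarrow> real \<Rightarrow> bool" where
  "semi_selfsimilar M X a H \<longleftrightarrow>
     (\<forall>ts. (\<forall>t\<in>set ts. 0 \<le> t) \<longrightarrow>
        fdd M X (map (\<lambda>t. a * t) ts) =
        fdd M X ts \<bind> (\<lambda>xs. measure_pmf (thin_vec (a powr H) xs)))"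

definition pgf :: "nat measure \<Rightarrow> real \<Rightarrow> real" where
  "pgf \<mu> s = (\<integral>k. s ^ k \<partial>\<mu>)"

definition discrete_semistable :: "real \<Rightarrow> real \<Rightarrow> nat measure \<Rightarrow> bool" where
  "discrete_semistable a b \<mu> \<longleftrightarrow>
     (\<forall>s\<in>{0..1}. pgf \<mu> s \<noteq> 0 \<and> pgf \<mu> s powr a = pgf \<mu> (1 - b + b * s))"

end

theory Submission
  imports Defs
begin

definition cnt :: "nat \<Rightarrow> bool list \<Rightarrow> nat" where
  "cnt x zs = length (filter id (take x zs))"

fun psum :: "nat list \<Rightarrow> nat list" where
  "psum [] = []"
| "psum (d # ds) = d # map ((+) d) (psum ds)"

fun ilist :: "(real \<Rightarrow> nat pmf) \<Rightarrow> real \<Rightarrow> real list \<Rightarrow> nat list pmf" where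
  "ilist G p [] = return_pmf []"
| "ilist G p (u # us) = map_pmf (\<lambda>(d, ds). d # ds) (pair_pmf (G (u - p)) (ilist G u us))"

definition thin1 :: "real \<Rightarrow> nat \<Rightarrow> nat pmf" where
  "thin1 c d = map_pmf (cnt d) (bern_list c d)"

fun ithin :: "real \<Rightarrow> nat list \<Rightarrow> nat list pmf" where
  "ithin c [] = return_pmf []"
| "ithin c (d # ds) = map_pmf (\<lambda>(e, es). e # es) (pair_pmf (thin1 c d) (ithin c ds))"

lemma bern_list_add:
  "bern_list c (n + k) = map_pmf (\<lambda>(x, y). x @ y) (pair_pmf (bern_list c n) (bern_list c k))"
proof (induction n)
  case 0
  then show ?case by (simp add: pair_return_pmf1 pmf.map_comp o_def)
next
  case (Suc n)
  show ?case
    by (simp add: Suc pair_pmf_def map_pmf_def bind_assoc_pmf bind_return_pmf)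
qed

lemma bern_list_length: "zs \<in> set_pmf (bern_list c n) \<Longrightarrow> length zs = n"
  by (induction n arbitrary: zs) auto

lemma cnt_append: "length a = n \<Longrightarrow> cnt (n + y) (a @ b) = cnt n a + cnt y b"
  by (simp add: cnt_def)

lemma cnt_append1: "x \<le> length a \<Longrightarrow> cnt x (a @ b) = cnt x a"
  by (simp add: cnt_def)

lemma cnt_0[simp]: "cnt 0 zs = 0" by (simp add: cnt_def)

lemma thin_vec_N:
  assumes "\<forall>x\<in>set xs. x \<le> N"
  shows "thin_vec c xs = map_pmf (\<lambda>zs. map (\<lambda>x. cnt x zs) xs) (bern_list c N)"
proof -
  define m where "m = (if xs = [] then 0 else Max (set xs))"
  have "m \<le> N" using assms by (auto simp: m_def)
  then obtain k where N: "N = m + k" using le_Suc_ex by blast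
  have "map_pmf (\<lambda>zs. map (\<lambda>x. cnt x zs) xs) (bern_list c N)
     = map_pmf (\<lambda>(a,b). map (\<lambda>x. cnt x a) xs) (pair_pmf (bern_list c m) (bern_list c k))"
    unfolding N bern_list_add pmf.map_comp
  proof (rule map_pmf_cong[OF refl])
    fix ab assume "ab \<in> set_pmf (pair_pmf (bern_list c m) (bern_list c k))"
    then obtain a b where ab: "ab = (a,b)" "length a = m"
      using bern_list_length by (cases ab) auto
    have "x \<le> length a" if "x \<in> set xs" for x
      using that ab by (auto simp: m_def)
    then show "((\<lambda>zs. map (\<lambda>x. cnt x zs) xs) \<circ> (\<lambda>(x, y). x @ y)) ab = (\<lambda>(a, b). map (\<lambda>x. cnt x a) xs) ab"
      using ab by (auto simp: cnt_append1)
  qed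
  also have "\<dots> = map_pmf (\<lambda>a. map (\<lambda>x. cnt x a) xs) (map_pmf fst (pair_pmf (bern_list c m) (bern_list c k)))"
    by (simp add: pmf.map_comp o_def case_prod_unfold)
  finally show ?thesis by (simp add: map_fst_pair_pmf thin_vec_def m_def cnt_def)
qed

lemma thin_psum:
  "map_pmf (\<lambda>zs. map (\<lambda>x. cnt x zs) (psum ds)) (bern_list c (sum_list ds)) = map_pmf psum (ithin c ds)"
proof (induction ds)
  case Nil
  then show ?case by simp
next
  case (Cons d ds)
  define F where "F b = map (\<lambda>x. cnt x b) (psum ds)" for b
  have "map_pmf (\<lambda>zs. map (\<lambda>x. cnt x zs) (psum (d # ds))) (bern_list c (sum_list (d # ds)))
     = map_pmf (\<lambda>(a,b). cnt d a # map ((+) (cnt d a)) (F b)) (pair_pmf (bern_list c d) (bern_list c (sum_list ds)))"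
    unfolding sum_list.Cons bern_list_add pmf.map_comp
  proof (rule map_pmf_cong[OF refl])
    fix ab assume "ab \<in> set_pmf (pair_pmf (bern_list c d) (bern_list c (sum_list ds)))"
    then obtain a b where ab: "ab = (a,b)" "length a = d"
      using bern_list_length by (cases ab) auto
    then show "((\<lambda>zs. map (\<lambda>x. cnt x zs) (psum (d # ds))) \<circ> (\<lambda>(x, y). x @ y)) ab =
         (\<lambda>(a, b). cnt d a # map ((+) (cnt d a)) (F b)) ab"
      by (auto simp: cnt_append cnt_append1 F_def)
  qed
  also have "\<dots> = map_pmf (\<lambda>(e,v). e # map ((+) e) v) (pair_pmf (map_pmf (cnt d) (bern_list c d)) (map_pmf F (bern_list c (sum_list ds))))"
    by (simp add: map_pair[symmetric] pmf.map_comp o_def case_prod_unfold)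
  also have "\<dots> = map_pmf (\<lambda>(e,v). e # map ((+) e) v) (pair_pmf (thin1 c d) (map_pmf psum (ithin c ds)))"
    using Cons.IH by (simp add: F_def[abs_def] thin1_def)
  also have "\<dots> = map_pmf psum (ithin c (d # ds))"
    by (simp add: pair_map_pmf2 pmf.map_comp o_def case_prod_unfold)
  finally show ?case .
qed

lemma bind_pair_pair:
  "bind_pmf (pair_pmf A B) (\<lambda>(x, y). pair_pmf (f x) (g y)) = pair_pmf (bind_pmf A f) (bind_pmf B g)"
  unfolding pair_pmf_def
  by (simp add: bind_assoc_pmf bind_return_pmf bind_commute_pmf[of B])

lemma ithin_bind:
  "bind_pmf (ilist G p us) (ithin c) = ilist (\<lambda>t. bind_pmf (G t) (thin1 c)) p us"
proof (induction us arbitrary: p)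
  case Nil
  then show ?case by (simp add: bind_return_pmf)
next
  case (Cons u us)
  have "bind_pmf (ilist G p (u # us)) (ithin c)
      = bind_pmf (pair_pmf (G (u - p)) (ilist G u us)) (\<lambda>(x, y). map_pmf (\<lambda>(e, es). e # es) (pair_pmf (thin1 c x) (ithin c y)))"
    by (simp add: bind_map_pmf case_prod_unfold)
  also have "\<dots> = map_pmf (\<lambda>(e, es). e # es) (bind_pmf (pair_pmf (G (u - p)) (ilist G u us)) (\<lambda>(x, y). pair_pmf (thin1 c x) (ithin c y)))"
    by (simp add: map_bind_pmf case_prod_unfold)
  also have "\<dots> = ilist (\<lambda>t. bind_pmf (G t) (thin1 c)) p (u # us)"
    by (simp add: bind_pair_pair Cons.IH)
  finally show ?case .
qed

lemma pgf_sums: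
  assumes "\<bar>s\<bar> \<le> 1"
  shows "(\<lambda>k. pmf p k * s ^ k) sums pgf (measure_pmf p) s"
proof -
  have int: "integrable (count_space UNIV) (\<lambda>k. pmf p k * s ^ k)"
  proof (rule Bochner_Integration.integrable_bound[OF integrable_pmf])
    show "AE x in count_space UNIV. norm (pmf p x * s ^ x) \<le> norm (pmf p x)"
      using assms by (auto simp: abs_mult power_abs intro!: mult_left_le power_le_one)
  qed auto
  have "pgf (measure_pmf p) s = integral\<^sup>L (count_space UNIV) (\<lambda>k. pmf p k * s ^ k)"
    unfolding pgf_def measure_pmf_eq_density
    by (subst integral_density) auto
  then show ?thesis using sums_integral_count_space_nat[OF int] by simp
qed

lemma pgf_bind:
  assumes "\<bar>s\<bar> \<le> 1"
  shows "pgf (measure_pmf (bind_pmf A f)) s = (\<integral>x. pgf (measure_pmf (f x)) s \<partial>measure_pmf A)"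
  unfolding pgf_def measure_pmf_bind
  apply (rule integral_bind[where K="count_space UNIV" and B=1 and B'=1])
  using assms by (auto simp: power_abs intro!: power_le_one measure_pmf.subprob_measure_le_1 measure_pmf_in_subprob_algebra)

lemma pgf_map: "pgf (measure_pmf (map_pmf g p)) s = (\<integral>k. s ^ g k \<partial>measure_pmf p)"
  unfolding pgf_def map_pmf_rep_eq by (subst integral_distr) auto

lemma pgf_return[simp]: "pgf (measure_pmf (return_pmf x)) s = s ^ x"
  unfolding pgf_def by simp

lemma pgf_integrable: "\<bar>s::real\<bar> \<le> 1 \<Longrightarrow> integrable (measure_pmf p) (\<lambda>k. s ^ k)"
  by (intro measure_pmf.integrable_const_bound[where B=1]) (auto simp: power_abs intro!: power_le_one)

lemma pgf_pair_sum:
  assumes "\<bar>s\<bar> \<le> 1"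
  shows "pgf (measure_pmf (map_pmf (\<lambda>(x, y). x + y) (pair_pmf A B))) s = pgf (measure_pmf A) s * pgf (measure_pmf B) s"
proof -
  have "map_pmf (\<lambda>(x, y). x + y) (pair_pmf A B) = bind_pmf A (\<lambda>x. map_pmf (\<lambda>y. x + y) B)"
    by (simp add: pair_pmf_def map_bind_pmf map_pmf_def[symmetric] bind_return_pmf pmf.map_comp o_def)
  then have "pgf (measure_pmf (map_pmf (\<lambda>(x, y). x + y) (pair_pmf A B))) s
      = (\<integral>x. pgf (measure_pmf (map_pmf (\<lambda>y. x + y) B)) s \<partial>measure_pmf A)"
    using pgf_bind[OF assms] by simp
  also have "\<dots> = (\<integral>x. s ^ x * pgf (measure_pmf B) s \<partial>measure_pmf A)"
    by (simp add: pgf_map power_add pgf_def)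
  also have "\<dots> = pgf (measure_pmf A) s * pgf (measure_pmf B) s"
    by (simp add: pgf_def)
  finally show ?thesis .
qed

lemma cnt_Suc_Cons: "cnt (Suc d) (z # zs) = (if z then 1 else 0) + cnt d zs"
  by (simp add: cnt_def)

lemma pgf_thin1:
  assumes "0 \<le> c" "c \<le> 1" "\<bar>s\<bar> \<le> 1"
  shows "pgf (measure_pmf (thin1 c d)) s = (1 - c + c * s) ^ d"
proof (induction d)
  case 0
  then show ?case by (simp add: thin1_def)
next
  case (Suc d)
  have "thin1 c (Suc d) = bind_pmf (bernoulli_pmf c) (\<lambda>z. map_pmf (\<lambda>zs. (if z then 1 else 0) + cnt d zs) (bern_list c d))"
    by (simp add: thin1_def map_bind_pmf pmf.map_comp o_def cnt_Suc_Cons)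
  then have "pgf (measure_pmf (thin1 c (Suc d))) s
     = (\<integral>z. pgf (measure_pmf (map_pmf (\<lambda>zs. (if z then 1 else 0) + cnt d zs) (bern_list c d))) s \<partial>measure_pmf (bernoulli_pmf c))"
    using pgf_bind[OF assms(3)] by simp
  also have "\<dots> = (\<integral>z. s ^ (if z then 1 else 0) * (1 - c + c * s) ^ d \<partial>measure_pmf (bernoulli_pmf c))"
    using Suc by (simp add: pgf_map power_add thin1_def pgf_def)
  also have "\<dots> = (1 - c + c * s) ^ Suc d"
    using assms by (simp add: algebra_simps)
  finally show ?case .
qed

lemma pgf_bind_thin1:
  assumes "0 \<le> c" "c \<le> 1" "\<bar>s\<bar> \<le> 1"
  shows "pgf (measure_pmf (bind_pmf p (thin1 c))) s = pgf (measure_pmf p) (1 - c + c * s)"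
  by (simp add: pgf_bind[OF assms(3)] pgf_thin1[OF assms]) (simp add: pgf_def)

lemma pgf_nonneg: "0 \<le> (s::real) \<Longrightarrow> 0 \<le> pgf \<mu> s"
  unfolding pgf_def by (rule integral_nonneg_AE) auto

lemma pgf_le1:
  assumes "0 \<le> s" "s \<le> (1::real)"
  shows "pgf (measure_pmf p) s \<le> 1"
proof -
  have "pgf (measure_pmf p) s \<le> (\<integral>k. 1 \<partial>measure_pmf p)"
    unfolding pgf_def
    using assms by (intro integral_mono pgf_integrable) (auto intro!: power_le_one)
  then show ?thesis by simp
qed

lemma pgf_pos:
  assumes "0 < s" "s \<le> (1::real)"
  shows "0 < pgf (measure_pmf p) s"
proof -
  obtain k where k: "k \<in> set_pmf p" using set_pmf_not_empty[of p] by blast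
  have sm: "(\<lambda>k. pmf p k * s ^ k) sums pgf (measure_pmf p) s"
    using assms by (intro pgf_sums) auto
  have "0 < suminf (\<lambda>k. pmf p k * s ^ k)"
    by (rule suminf_pos2[where i=k]) (use sm assms k in \<open>auto simp: sums_iff set_pmf_iff pmf_nonneg\<close>)
  then show ?thesis using sm sums_unique by fastforce
qed

lemma pgf_unique:
  assumes eq: "\<And>s. 0 \<le> s \<Longrightarrow> s \<le> 1 \<Longrightarrow> pgf (measure_pmf p) s = pgf (measure_pmf q) s"
  shows "p = q"
proof -
  define a where "a n = pmf p n - pmf q n" for n
  have sm: "(\<lambda>n. a n * s ^ n) sums 0" if "0 \<le> s" "s \<le> 1" for s :: real
  proof -
    have "(\<lambda>n. pmf p n * s ^ n - pmf q n * s ^ n) sums (pgf (measure_pmf p) s - pgf (measure_pmf q) s)"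
      using that by (intro sums_diff pgf_sums) auto
    then show ?thesis using eq[OF that] by (simp add: a_def algebra_simps)
  qed
  have "a n = 0" for n
  proof (induction n rule: less_induct)
    case (less n)
    define g where "g x = (\<Sum>k. a (k + n) * x ^ k)" for x :: real
    have gs: "(\<lambda>k. a (k + n) * x ^ k) sums 0" if "0 < x" "x \<le> 1" for x :: real
    proof -
      have "(\<lambda>k. a (k + n) * x ^ (k + n)) sums 0"
        using sm[of x] that less by (subst sums_zero_iff_shift) auto
      then have "(\<lambda>k. x ^ n * (a (k + n) * x ^ k)) sums 0"
        by (simp add: power_add algebra_simps)
      then show ?thesis using sums_mult_D[of "x ^ n"] that by fastforce
    qed
    have g0: "g x = 0" if "0 < x" "x \<le> 1" for x
      using gs[OF that] by (simp add: g_def sums_iff)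
    have "isCont g 0"
      unfolding g_def
      by (rule isCont_powser[where K=1]) (use gs[of 1] in \<open>auto simp: sums_iff\<close>)
    then have "(g \<longlongrightarrow> g 0) (at_right 0)"
      by (simp add: isCont_def filterlim_at_split)
    moreover have "(g \<longlongrightarrow> 0) (at_right 0)"
    proof (rule tendsto_eventually)
      show "\<forall>\<^sub>F x in at_right 0. g x = 0"
        using eventually_at_right_real[of 0 1] by (rule eventually_mono) (auto intro: g0)
    qed
    ultimately have "g 0 = 0" by (intro tendsto_unique[OF trivial_limit_at_right_real])
    then show ?case by (simp add: g_def)
  qed
  then show ?thesis by (intro pmf_eqI) (simp add: a_def)
qed

lemma mult_exp:
  fixes g :: "real \<Rightarrow> real"
  assumes mult: "\<And>t u. 0 \<le> t \<Longrightarrow> 0 \<le> u \<Longrightarrow> g (t + u) = g t * g u"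
    and bnd: "\<And>t. 0 \<le> t \<Longrightarrow> 0 \<le> g t \<and> g t \<le> 1"
    and pos: "g 1 > 0"
    and t0: "0 \<le> t"
  shows "g t = g 1 powr t"
proof -
  have gn: "g (real n * x) = g x ^ n" if "0 \<le> x" for n x
  proof (induction n)
    case 0
    have "g 0 * g 1 = 1 * g 1" using mult[of 0 1] by simp
    then have "g 0 = 1" using pos by (metis mult_right_cancel less_irrefl)
    then show ?case by simp
  next
    case (Suc n)
    have "g (real (Suc n) * x) = g (real n * x + x)" by (simp add: algebra_simps)
    also have "\<dots> = g (real n * x) * g x" using that by (intro mult) auto
    finally show ?case using Suc by simp
  qed
  have mono: "g u \<le> g s" if "0 \<le> s" "s \<le> u" for s u
  proof -
    have "g u = g s * g (u - s)" using mult[of s "u - s"] that by simp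
    also have "\<dots> \<le> g s" using bnd[of s] bnd[of "u - s"] that by (simp add: mult_left_le)
    finally show ?thesis .
  qed
  have gpos: "g x > 0" if "0 \<le> x" for x
  proof -
    define n where "n = nat \<lceil>x\<rceil>"
    have "x \<le> real n" unfolding n_def by linarith
    have "g (real n) = g 1 ^ n" using gn[of 1 n] by simp
    also have "\<dots> > 0" using pos by simp
    finally show ?thesis using mono[OF that \<open>x \<le> real n\<close>] by simp
  qed
  define h where "h x = ln (g x)" for x
  have hn: "h (real n * x) = real n * h x" if "0 \<le> x" for n x
    using gn[OF that, of n] gpos[OF that] by (simp add: h_def ln_realpow)
  have hmono: "h u \<le> h s" if "0 \<le> s" "s \<le> u" for s u
    using mono[OF that] gpos that unfolding h_def by simp
  have h1: "h 1 \<le> 0" using bnd[of 1] pos by (simp add: h_def)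
  have hq: "h (real m / real n) = real m / real n * h 1" if "n \<ge> 1" for m n
  proof -
    have "h 1 = real n * h (1 / real n)" using hn[of "1 / real n" n] that by simp
    moreover have "h (real m / real n) = real m * h (1 / real n)" using hn[of "1 / real n" m] that by simp
    ultimately show ?thesis using that by (simp add: field_simps)
  qed
  have bound: "\<bar>h t - t * h 1\<bar> \<le> - h 1 / real n" if "n \<ge> 1" for n
  proof -
    define m where "m = nat \<lfloor>real n * t\<rfloor>"
    have m1: "real m \<le> real n * t" using t0 unfolding m_def by (simp add: of_nat_floor)
    have m2: "real n * t < real m + 1" using t0 unfolding m_def by linarith
    have n0: "real n > 0" using that by simp
    have a1: "real m / real n \<le> t" using m1 n0 by (simp add: field_simps)
    have a2: "t \<le> real (m + 1) / real n" using m2 n0 by (simp add: field_simps)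
    have a3: "real (m+1) / real n - t \<le> 1 / real n" using m1 n0 by (simp add: field_simps)
    have a4': "(real n * t - real m) / real n \<le> 1 / real n"
      by (rule divide_right_mono) (use m2 n0 in auto)
    have a4: "t - real m / real n \<le> 1 / real n" using a4' n0 by (simp add: diff_divide_distrib)
    have up: "h t \<le> real m / real n * h 1" using hmono[OF _ a1] hq[OF that] by simp
    have lo: "real (m+1) / real n * h 1 \<le> h t" using hmono[OF t0 a2] hq[OF that, of "m+1"] by simp
    have "(t - real m / real n) * h 1 \<ge> 1 / real n * h 1"
      using a4 h1 by (intro mult_right_mono_neg) auto
    moreover have "(real (m+1) / real n - t) * h 1 \<ge> 1 / real n * h 1"
      using a3 h1 by (intro mult_right_mono_neg) auto
    moreover have "(t - real m / real n) * h 1 \<le> 0" using a1 h1 by (intro mult_nonneg_nonpos) auto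
    moreover have "(real (m+1) / real n - t) * h 1 \<le> 0" using a2 h1 by (intro mult_nonneg_nonpos) auto
    ultimately show ?thesis using up lo by (simp add: algebra_simps abs_le_iff)
  qed
  have "h t = t * h 1"
  proof (rule ccontr)
    assume ne: "h t \<noteq> t * h 1"
    define d where "d = \<bar>h t - t * h 1\<bar>"
    have d0: "d > 0" using ne by (simp add: d_def)
    obtain n :: nat where n: "n > - h 1 / d" using reals_Archimedean2 by blast
    define n' where "n' = max n 1"
    have "real n' > - h 1 / d" using n by (simp add: n'_def)
    then have "real n' * d > - h 1" using d0 by (simp add: field_simps)
    moreover have "d \<le> - h 1 / real n'" using bound[of n'] by (simp add: d_def n'_def)
    then have "real n' * d \<le> - h 1" by (simp add: field_simps n'_def)
    ultimately show False by simp
  qed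
  then show ?thesis
    using gpos[OF t0] pos by (simp add: h_def powr_def mult.commute) (metis exp_ln)
qed

lemma mult_zero:
  fixes g :: "real \<Rightarrow> real"
  assumes mult: "\<And>t u. 0 \<le> t \<Longrightarrow> 0 \<le> u \<Longrightarrow> g (t + u) = g t * g u"
    and bnd: "\<And>t. 0 \<le> t \<Longrightarrow> 0 \<le> g t \<and> g t \<le> 1"
    and z: "g 1 = 0"
    and t0: "0 < t"
  shows "g t = 0"
proof -
  have gn: "g (real (Suc n) * x) = g x ^ Suc n" if "0 \<le> x" for n x
  proof (induction n)
    case 0
    then show ?case by simp
  next
    case (Suc n)
    have "g (real (Suc (Suc n)) * x) = g (real (Suc n) * x + x)" by (simp add: algebra_simps)
    also have "\<dots> = g (real (Suc n) * x) * g x" using that by (intro mult) auto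
    finally show ?case using Suc by simp
  qed
  obtain n :: nat where n: "n > 1 / t" using reals_Archimedean2 by blast
  have npos: "real n > 0" using n t0 by (smt (verit) divide_pos_pos)
  then obtain k where k: "n = Suc k" by (cases n) auto
  have "g 1 = g (1 / real n) ^ n"
    using gn[of "1 / real n" k] k npos by simp
  then have g1n: "g (1 / real n) = 0" using z by simp
  have le: "1 / real n \<le> t" using n npos t0 by (simp add: field_simps)
  have "g t = g (1 / real n) * g (t - 1 / real n)"
    using mult[of "1 / real n" "t - 1 / real n"] le npos by simp
  then show ?thesis using g1n by simp
qed

fun incs :: "(real \<Rightarrow> 'a \<Rightarrow> nat) \<Rightarrow> 'a \<Rightarrow> real \<Rightarrow> real list \<Rightarrow> nat list" where
  "incs X \<omega> p [] = []"
| "incs X \<omega> p (u # us) = (X u \<omega> - X p \<omega>) # incs X \<omega> u us"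

lemma length_incs[simp]: "length (incs X \<omega> p us) = length us"
  by (induction us arbitrary: p) auto

lemma incs_nth: "j < length us \<Longrightarrow> incs X \<omega> p us ! j = X ((p # us) ! Suc j) \<omega> - X ((p # us) ! j) \<omega>"
  by (induction us arbitrary: p j) (auto simp: nth_Cons split: nat.splits)

lemma psum_incs:
  assumes "sorted_wrt (<) (p # us)"
    and "\<forall>s\<in>set (p # us). \<forall>t\<in>set (p # us). s \<le> t \<longrightarrow> X s \<omega> \<le> X t \<omega>"
  shows "map ((+) (X p \<omega>)) (psum (incs X \<omega> p us)) = map (\<lambda>u. X u \<omega>) us"
  using assms
proof (induction us arbitrary: p)
  case Nil
  then show ?case by simp
next
  case (Cons u us)
  have le: "X p \<omega> \<le> X u \<omega>" using Cons.prems by auto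
  have IH: "map ((+) (X u \<omega>)) (psum (incs X \<omega> u us)) = map (\<lambda>u. X u \<omega>) us"
    using Cons.prems by (intro Cons.IH) auto
  show ?case using le IH[symmetric] by (simp add: comp_def algebra_simps)
qed

lemma pmf_ilist:
  "pmf (ilist G p us) ds = (if length ds = length us then (\<Prod>j<length us. pmf (G ((p # us) ! Suc j - (p # us) ! j)) (ds ! j)) else 0)"
proof (induction us arbitrary: p ds)
  case Nil
  then show ?case by (cases ds) (auto simp: pmf_return)
next
  case (Cons u us)
  have inj: "inj (\<lambda>(d::nat, ds::nat list). d # ds)" by (auto simp: inj_def)
  show ?case
  proof (cases ds)
    case Nil
    have "pmf (ilist G p (u # us)) [] = 0"
      by (auto simp: pmf_eq_0_set_pmf)
    then show ?thesis using Nil by simp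
  next
    case (Cons d ds')
    have "pmf (ilist G p (u # us)) (d # ds') = pmf (G (u - p)) d * pmf (ilist G u us) ds'"
      using pmf_map_inj'[OF inj, of _ "(d, ds')"] by (simp add: pmf_pair)
    then show ?thesis using Cons Cons.IH[of u ds'] by (simp add: prod.lessThan_Suc_shift del: prod.lessThan_Suc)
  qed
qed

lemma meas2:
  fixes f :: "'a \<Rightarrow> 'b::countable" and g :: "'a \<Rightarrow> 'c::countable"
  assumes "f \<in> M \<rightarrow>\<^sub>M count_space UNIV" "g \<in> M \<rightarrow>\<^sub>M count_space UNIV"
  shows "(\<lambda>\<omega>. h (f \<omega>) (g \<omega>)) \<in> M \<rightarrow>\<^sub>M count_space UNIV"
  by (rule measurable_compose_countable'[where f="\<lambda>a \<omega>. h a (g \<omega>)" and g=f and I=UNIV])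
     (auto intro: measurable_compose[OF assms(2)] assms(1))

locale levy = prob_space M for M :: "'a measure" +
  fixes X :: "real \<Rightarrow> 'a \<Rightarrow> nat"
  assumes L: "levy_process M X"
begin

lemma meas: "0 \<le> t \<Longrightarrow> X t \<in> M \<rightarrow>\<^sub>M count_space UNIV"
  using L unfolding levy_process_def by blast

lemma X0: "AE \<omega> in M. X 0 \<omega> = 0"
  using L unfolding levy_process_def by blast

lemma stat: "0 \<le> s \<Longrightarrow> s \<le> t \<Longrightarrow>
        distr M (count_space UNIV) (\<lambda>\<omega>. int (X t \<omega>) - int (X s \<omega>)) =
        distr M (count_space UNIV) (\<lambda>\<omega>. int (X (t - s) \<omega>))"
  using L unfolding levy_process_def by blast

lemma indep: "0 \<le> \<tau> 0 \<Longrightarrow> (\<forall>i<n. \<tau> i < \<tau> (Suc i)) \<Longrightarrow>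
        indep_vars (\<lambda>_. count_space UNIV) (\<lambda>i \<omega>. int (X (\<tau> (Suc i)) \<omega>) - int (X (\<tau> i) \<omega>)) {..<n}"
  using L unfolding levy_process_def by blast

lemma meas_diff: "0 \<le> s \<Longrightarrow> 0 \<le> t \<Longrightarrow> (\<lambda>\<omega>. int (X t \<omega>) - int (X s \<omega>)) \<in> M \<rightarrow>\<^sub>M count_space UNIV"
  using meas[of s] meas[of t] by (intro meas2[where h="\<lambda>a b. int a - int b" and f="X t" and g="X s", simplified]) auto

lemma meas_int: "0 \<le> t \<Longrightarrow> (\<lambda>\<omega>. int (X t \<omega>)) \<in> M \<rightarrow>\<^sub>M count_space UNIV"
  by (rule measurable_compose[OF meas]) auto

lemma prob_diff:
  assumes "0 \<le> s" "s \<le> t"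
  shows "prob {\<omega>\<in>space M. int (X t \<omega>) - int (X s \<omega>) \<in> A} = prob {\<omega>\<in>space M. int (X (t - s) \<omega>) \<in> A}"
proof -
  have "measure (distr M (count_space UNIV) (\<lambda>\<omega>. int (X t \<omega>) - int (X s \<omega>))) A =
        measure (distr M (count_space UNIV) (\<lambda>\<omega>. int (X (t - s) \<omega>))) A"
    using stat[OF assms] by simp
  then show ?thesis
    using assms meas_diff[of s t] meas_int[of "t - s"]
    by (simp add: measure_distr vimage_def Int_def conj_commute)
qed

lemma mono_ae:
  assumes "0 \<le> s" "s \<le> t"
  shows "AE \<omega> in M. X s \<omega> \<le> X t \<omega>"
proof -
  have "prob {\<omega>\<in>space M. int (X t \<omega>) - int (X s \<omega>) \<in> {z. z < 0}} = prob {\<omega>\<in>space M. int (X (t - s) \<omega>) \<in> {z. z < 0}}"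
    by (rule prob_diff[OF assms])
  then have z: "prob {\<omega>\<in>space M. \<not> X s \<omega> \<le> X t \<omega>} = 0"
    by (simp add: not_le)
  have "{\<omega>\<in>space M. \<not> X s \<omega> \<le> X t \<omega>} = (\<lambda>\<omega>. int (X t \<omega>) - int (X s \<omega>)) -` {z. z < 0} \<inter> space M"
    by auto
  then have ms: "{\<omega>\<in>space M. \<not> X s \<omega> \<le> X t \<omega>} \<in> sets M"
    using measurable_sets[OF meas_diff[of s t], of "{z. z < 0}"] assms by (simp only:) simp
  show ?thesis
    by (subst AE_iff_measurable[OF ms refl]) (simp add: emeasure_eq_measure z)
qed

definition G :: "real \<Rightarrow> nat pmf" where
  "G t = Abs_pmf (distr M (count_space UNIV) (X t))"

lemma G_eq:
  assumes t: "0 \<le> t"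
  shows "measure_pmf (G t) = distr M (count_space UNIV) (X t)"
proof -
  have pd: "prob_space (distr M (count_space UNIV) (X t))"
    using t meas by (intro prob_space_distr) auto
  interpret D: prob_space "distr M (count_space UNIV) (X t)" by (rule pd)
  have ae: "AE x in distr M (count_space UNIV) (X t). measure (distr M (count_space UNIV) (X t)) {x} \<noteq> 0"
    by (subst D.AE_support_countable) auto
  show ?thesis unfolding G_def
    by (intro Abs_pmf_inverse) (simp add: pd ae)
qed

lemma pmf_G: "0 \<le> t \<Longrightarrow> pmf (G t) k = prob {\<omega>\<in>space M. X t \<omega> = k}"
  using meas[of t] by (simp add: pmf.rep_eq G_eq measure_distr vimage_def Int_def conj_commute)

end

definition sel :: "real list \<Rightarrow> real list \<Rightarrow> nat list \<Rightarrow> nat list" where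
  "sel us ts ys = map (\<lambda>t. case map_of (zip us ys) t of None \<Rightarrow> 0 | Some y \<Rightarrow> y) ts"

context levy
begin

lemma meas_incs: "0 \<le> p \<Longrightarrow> \<forall>u\<in>set us. 0 \<le> u \<Longrightarrow> (\<lambda>\<omega>. incs X \<omega> p us) \<in> M \<rightarrow>\<^sub>M count_space UNIV"
proof (induction us arbitrary: p)
  case Nil
  then show ?case by simp
next
  case (Cons u us)
  have m1: "(\<lambda>\<omega>. X u \<omega> - X p \<omega>) \<in> M \<rightarrow>\<^sub>M count_space UNIV"
    using meas[of u] meas[of p] Cons.prems
    by (intro meas2[where h="\<lambda>a b. a - b" and f="X u" and g="X p", simplified]) auto
  have m2: "(\<lambda>\<omega>. incs X \<omega> u us) \<in> M \<rightarrow>\<^sub>M count_space UNIV"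
    using Cons by auto
  show ?case
    using meas2[where h="\<lambda>a b. a # b", OF m1 m2] by simp
qed

lemma meas_map: "\<forall>t\<in>set ts. 0 \<le> t \<Longrightarrow> (\<lambda>\<omega>. map (\<lambda>t. X t \<omega>) ts) \<in> M \<rightarrow>\<^sub>M count_space UNIV"
proof (induction ts)
  case Nil
  then show ?case by simp
next
  case (Cons t ts)
  have m1: "X t \<in> M \<rightarrow>\<^sub>M count_space UNIV" using Cons.prems meas by auto
  have m2: "(\<lambda>\<omega>. map (\<lambda>t. X t \<omega>) ts) \<in> M \<rightarrow>\<^sub>M count_space UNIV" using Cons by auto
  show ?case
    using meas2[where h="\<lambda>a b. a # b", OF m1 m2] by simp
qed

lemma mono_all:
  assumes "finite S" "\<forall>s\<in>S. 0 \<le> s"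
  shows "AE \<omega> in M. \<forall>s\<in>S. \<forall>t\<in>S. s \<le> t \<longrightarrow> X s \<omega> \<le> X t \<omega>"
proof (intro AE_finite_allI[OF assms(1)])
  fix s t assume st: "s \<in> S" "t \<in> S"
  show "AE \<omega> in M. s \<le> t \<longrightarrow> X s \<omega> \<le> X t \<omega>"
  proof (cases "s \<le> t")
    case True
    then show ?thesis using mono_ae[of s t] st assms(2) by auto
  qed simp
qed

lemma prob_incs:
  assumes sorted: "sorted_wrt (<) (0 # us)"
  shows "prob {\<omega>\<in>space M. incs X \<omega> 0 us = ds} = pmf (ilist G 0 us) ds"
proof -
  define m where "m = length us"
  define \<tau> where "\<tau> j = (0 # us) ! j" for j
  have strict: "\<tau> i < \<tau> j" if "i < j" "j \<le> m" for i j
    using sorted_wrt_nth_less[OF sorted, of i j] that by (simp add: \<tau>_def m_def)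
  have t0: "\<tau> 0 = 0" by (simp add: \<tau>_def)
  have tnn: "0 \<le> \<tau> j" if "j \<le> m" for j
    using strict[of 0 j] that t0 by (cases "j = 0") auto
  have us_nn: "\<forall>u\<in>set us. 0 \<le> u"
    using sorted by auto
  show ?thesis
  proof (cases "length ds = m")
    case False
    then have e: "{\<omega>\<in>space M. incs X \<omega> 0 us = ds} = {}" by (auto simp: m_def)
    show ?thesis unfolding e using False by (simp add: pmf_ilist m_def)
  next
    case len: True
    show ?thesis
    proof (cases "m = 0")
      case True
      then show ?thesis using len by (simp add: m_def pmf_return prob_space)
    next
      case m0: False
      define D where "D j \<omega> = int (X (\<tau> (Suc j)) \<omega>) - int (X (\<tau> j) \<omega>)" for j \<omega>
      define E where "E j = D j -` {int (ds ! j)} \<inter> space M" for j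
      have ind: "indep_vars (\<lambda>_. count_space UNIV) D {..<m}"
        unfolding D_def using indep[of \<tau> m] t0 strict by auto
      then have "indep_sets (\<lambda>i. {D i -` A \<inter> space M | A. A \<in> sets (count_space UNIV)}) {..<m}"
        by (simp add: indep_vars_def2)
      then have pE: "prob (\<Inter>j\<in>{..<m}. E j) = (\<Prod>j<m. prob (E j))"
        unfolding indep_sets_def using m0
        by (auto simp: E_def lessThan_empty_iff elim!: allE[of _ "{..<m}"] ballE[of _ _ E])
      have Ej: "E j \<in> sets M" if "j < m" for j
        unfolding E_def D_def
        using tnn[of j] tnn[of "Suc j"] that
        by (intro measurable_sets[OF meas_diff]) auto
      have Einter: "(\<Inter>j\<in>{..<m}. E j) \<in> sets M"
        using Ej m0 by (intro sets.finite_INT) auto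
      have Aset: "{\<omega>\<in>space M. incs X \<omega> 0 us = ds} \<in> sets M"
      proof -
        have "{\<omega>\<in>space M. incs X \<omega> 0 us = ds} = (\<lambda>\<omega>. incs X \<omega> 0 us) -` {ds} \<inter> space M" by auto
        then show ?thesis using measurable_sets[OF meas_incs[OF _ us_nn], of 0 "{ds}"] by simp
      qed
      have ae0: "AE \<omega> in M. \<forall>j\<in>{..<m}. X (\<tau> j) \<omega> \<le> X (\<tau> (Suc j)) \<omega>"
      proof (rule AE_finite_allI)
        fix j assume "j \<in> {..<m}"
        then show "AE \<omega> in M. X (\<tau> j) \<omega> \<le> X (\<tau> (Suc j)) \<omega>"
          using strict[of j "Suc j"] tnn[of j] by (intro mono_ae) auto
      qed simp
      then have ae: "AE \<omega> in M. \<forall>j<m. X (\<tau> j) \<omega> \<le> X (\<tau> (Suc j)) \<omega>" by eventually_elim auto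
      have "prob {\<omega>\<in>space M. incs X \<omega> 0 us = ds} = prob (\<Inter>j\<in>{..<m}. E j)"
      proof (rule measure_eq_AE[OF _ Aset Einter])
        show "AE \<omega> in M. (\<omega> \<in> {\<omega> \<in> space M. incs X \<omega> 0 us = ds}) = (\<omega> \<in> (\<Inter>j\<in>{..<m}. E j))"
          using ae AE_space
        proof eventually_elim
          case (elim \<omega>)
          have "incs X \<omega> 0 us = ds \<longleftrightarrow> (\<forall>j<m. incs X \<omega> 0 us ! j = ds ! j)"
            using len by (simp add: list_eq_iff_nth_eq m_def)
          also have "\<dots> \<longleftrightarrow> (\<forall>j<m. D j \<omega> = int (ds ! j))"
          proof -
            have "incs X \<omega> 0 us ! j = ds ! j \<longleftrightarrow> D j \<omega> = int (ds ! j)" if "j < m" for j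
            proof -
              have le: "X (\<tau> j) \<omega> \<le> X (\<tau> (Suc j)) \<omega>" using elim(1) that by auto
              have "incs X \<omega> 0 us ! j = X (\<tau> (Suc j)) \<omega> - X (\<tau> j) \<omega>"
                using that by (simp add: incs_nth m_def \<tau>_def)
              then show ?thesis using le by (simp add: D_def; arith)
            qed
            then show ?thesis by auto
          qed
          finally show ?case using elim(2) m0 by (auto simp: E_def)
        qed
      qed
      also have "\<dots> = (\<Prod>j<m. prob (E j))" by (rule pE)
      also have "\<dots> = (\<Prod>j<m. pmf (G (\<tau> (Suc j) - \<tau> j)) (ds ! j))"
      proof (rule prod.cong[OF refl])
        fix j assume "j \<in> {..<m}"
        then have j: "j < m" by simp
        have "prob (E j) = prob {\<omega>\<in>space M. int (X (\<tau> (Suc j)) \<omega>) - int (X (\<tau> j) \<omega>) \<in> {int (ds ! j)}}"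
          by (simp add: E_def D_def vimage_def Int_def conj_commute)
        also have "\<dots> = prob {\<omega>\<in>space M. int (X (\<tau> (Suc j) - \<tau> j) \<omega>) \<in> {int (ds ! j)}}"
          using strict[of j "Suc j"] tnn[of j] j by (intro prob_diff) auto
        also have "\<dots> = pmf (G (\<tau> (Suc j) - \<tau> j)) (ds ! j)"
          using strict[of j "Suc j"] j by (subst pmf_G) auto
        finally show "prob (E j) = pmf (G (\<tau> (Suc j) - \<tau> j)) (ds ! j)" .
      qed
      also have "\<dots> = pmf (ilist G 0 us) ds"
        using len by (simp add: pmf_ilist m_def \<tau>_def)
      finally show ?thesis .
    qed
  qed
qed


lemma distr_incs:
  assumes sorted: "sorted_wrt (<) (0 # us)"
  shows "distr M (count_space UNIV) (\<lambda>\<omega>. incs X \<omega> 0 us) = measure_pmf (ilist G 0 us)"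
proof (rule measure_eqI_countable[where A=UNIV])
  have us_nn: "\<forall>u\<in>set us. 0 \<le> u" using sorted by auto
  fix ds :: "nat list"
  have mi: "(\<lambda>\<omega>. incs X \<omega> 0 us) \<in> M \<rightarrow>\<^sub>M count_space UNIV" using meas_incs[OF _ us_nn] by simp
  have "emeasure (distr M (count_space UNIV) (\<lambda>\<omega>. incs X \<omega> 0 us)) {ds}
      = emeasure M ((\<lambda>\<omega>. incs X \<omega> 0 us) -` {ds} \<inter> space M)"
    by (rule emeasure_distr[OF mi]) simp
  also have "(\<lambda>\<omega>. incs X \<omega> 0 us) -` {ds} \<inter> space M = {\<omega>\<in>space M. incs X \<omega> 0 us = ds}" by auto
  also have "emeasure M {\<omega>\<in>space M. incs X \<omega> 0 us = ds} = ennreal (pmf (ilist G 0 us) ds)"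
    using prob_incs[OF sorted] by (simp add: emeasure_eq_measure)
  finally show "emeasure (distr M (count_space UNIV) (\<lambda>\<omega>. incs X \<omega> 0 us)) {ds} = emeasure (measure_pmf (ilist G 0 us)) {ds}"
    by (simp add: emeasure_pmf_single)
qed auto

lemma AE_psum:
  assumes sorted: "sorted_wrt (<) (0 # us)"
  shows "AE \<omega> in M. psum (incs X \<omega> 0 us) = map (\<lambda>u. X u \<omega>) us"
proof -
  have nn: "\<forall>s\<in>set (0 # us). 0 \<le> s" using sorted by auto
  have ma: "AE \<omega> in M. \<forall>s\<in>set (0 # us). \<forall>t\<in>set (0 # us). s \<le> t \<longrightarrow> X s \<omega> \<le> X t \<omega>"
    using mono_all[OF _ nn] by simp
  show ?thesis
    using ma X0
  proof eventually_elim
    case (elim \<omega>)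
    have "map ((+) (X 0 \<omega>)) (psum (incs X \<omega> 0 us)) = map (\<lambda>u. X u \<omega>) us"
      by (rule psum_incs[where X=X, OF sorted elim(1)])
    moreover have "map ((+) (0::nat)) l = l" for l by (induction l) auto
    ultimately show ?case using elim(2) by simp
  qed
qed

lemma distr_map_ilist:
  assumes sorted: "sorted_wrt (<) (0 # us)"
  shows "distr M (count_space UNIV) (\<lambda>\<omega>. F (map (\<lambda>u. X u \<omega>) us)) = measure_pmf (map_pmf (F \<circ> psum) (ilist G 0 us))"
proof -
  have us_nn: "\<forall>u\<in>set us. 0 \<le> u" using sorted by auto
  have mi: "(\<lambda>\<omega>. incs X \<omega> 0 us) \<in> M \<rightarrow>\<^sub>M count_space UNIV" using meas_incs[OF _ us_nn] by simp
  have mm: "(\<lambda>\<omega>. map (\<lambda>u. X u \<omega>) us) \<in> M \<rightarrow>\<^sub>M count_space UNIV" using meas_map[OF us_nn] .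
  have "distr M (count_space UNIV) (\<lambda>\<omega>. F (map (\<lambda>u. X u \<omega>) us)) = distr M (count_space UNIV) ((F \<circ> psum) \<circ> (\<lambda>\<omega>. incs X \<omega> 0 us))"
  proof (rule distr_cong_AE[OF refl refl])
    show "AE \<omega> in M. F (map (\<lambda>u. X u \<omega>) us) = ((F \<circ> psum) \<circ> (\<lambda>\<omega>. incs X \<omega> 0 us)) \<omega>"
      using AE_psum[OF sorted] by eventually_elim simp
    show "(\<lambda>\<omega>. F (map (\<lambda>u. X u \<omega>) us)) \<in> M \<rightarrow>\<^sub>M count_space UNIV"
      by (rule measurable_compose[OF mm]) simp
    show "(F \<circ> psum) \<circ> (\<lambda>\<omega>. incs X \<omega> 0 us) \<in> M \<rightarrow>\<^sub>M count_space UNIV"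
      by (rule measurable_comp[OF mi]) simp
  qed
  also have "\<dots> = distr (distr M (count_space UNIV) (\<lambda>\<omega>. incs X \<omega> 0 us)) (count_space UNIV) (F \<circ> psum)"
    by (rule distr_distr[symmetric]) (auto intro: mi)
  also have "\<dots> = measure_pmf (map_pmf (F \<circ> psum) (ilist G 0 us))"
    by (simp add: distr_incs[OF sorted] map_pmf_rep_eq)
  finally show ?thesis .
qed

lemma sorted_us:
  assumes "\<forall>t\<in>set ts. 0 \<le> t"
  shows "sorted_wrt (<) (0 # sorted_list_of_set {t\<in>set ts. 0 < t})"
  by (simp add: strict_sorted_list_of_set)

lemma fdd_repr:
  assumes nn: "\<forall>t\<in>set ts. 0 \<le> t"
  defines "us \<equiv> sorted_list_of_set {t\<in>set ts. 0 < t}"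
  shows "fdd M X ts = measure_pmf (map_pmf (sel us ts \<circ> psum) (ilist G 0 us))"
proof -
  have sorted: "sorted_wrt (<) (0 # us)" unfolding us_def by (rule sorted_us[OF nn])
  have setus: "set us = {t\<in>set ts. 0 < t}" unfolding us_def by simp
  have "fdd M X ts = distr M (count_space UNIV) (\<lambda>\<omega>. sel us ts (map (\<lambda>u. X u \<omega>) us))"
    unfolding fdd_def
  proof (rule distr_cong_AE[OF refl refl])
    show "AE \<omega> in M. map (\<lambda>t. X t \<omega>) ts = sel us ts (map (\<lambda>u. X u \<omega>) us)"
      using X0
    proof eventually_elim
      case (elim \<omega>)
      show ?case
        unfolding sel_def map_of_zip_map
      proof (rule map_cong[OF refl])
        fix t assume t: "t \<in> set ts"
        show "X t \<omega> = (case if t \<in> set us then Some (X t \<omega>) else None of None \<Rightarrow> 0 | Some y \<Rightarrow> y)"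
        proof (cases "t \<in> set us")
          case False
          then have "t = 0" using t nn setus by force
          then show ?thesis using elim False by simp
        qed simp
      qed
    qed
    show "(\<lambda>\<omega>. map (\<lambda>t. X t \<omega>) ts) \<in> M \<rightarrow>\<^sub>M count_space UNIV" using meas_map[OF nn] .
    have us_nn: "\<forall>u\<in>set us. 0 \<le> u" using sorted by auto
    show "(\<lambda>\<omega>. sel us ts (map (\<lambda>u. X u \<omega>) us)) \<in> M \<rightarrow>\<^sub>M count_space UNIV"
      by (rule measurable_compose[OF meas_map[OF us_nn]]) simp
  qed
  also have "\<dots> = measure_pmf (map_pmf (sel us ts \<circ> psum) (ilist G 0 us))"
    by (rule distr_map_ilist[OF sorted])
  finally show ?thesis .
qed

end

lemma map_of_zip_map_inj:
  "inj f \<Longrightarrow> map_of (zip (map f xs) ys) (f x) = map_of (zip xs ys) x"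
proof (induction xs arbitrary: ys)
  case Nil
  then show ?case by simp
next
  case (Cons a xs)
  then show ?case by (cases ys) (auto dest: injD)
qed

lemma map_of_zip_map_right:
  "map_of (zip xs (map f ys)) x = map_option f (map_of (zip xs ys) x)"
proof (induction xs arbitrary: ys)
  case Nil
  then show ?case by simp
next
  case (Cons a xs)
  then show ?case by (cases ys) auto
qed

lemma sel_scale:
  assumes "inj f"
  shows "sel (map f us) (map f ts) ys = sel us ts ys"
  unfolding sel_def by (simp add: map_of_zip_map_inj[OF assms])

lemma sel_map:
  assumes "f 0 = 0"
  shows "map f (sel us ts ys) = sel us ts (map f ys)"
  unfolding sel_def using assms by (auto simp: map_of_zip_map_right split: option.splits)

lemma sel_le:
  assumes "\<forall>y\<in>set ys. y \<le> N"
  shows "\<forall>x\<in>set (sel us ts ys). x \<le> (N::nat)"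
  unfolding sel_def using assms
  by (auto split: option.splits dest!: map_of_SomeD set_zip_rightD)

lemma psum_le: "\<forall>x\<in>set (psum ds). x \<le> sum_list ds"
  by (induction ds) auto

lemma ilist_scale:
  "ilist G (a * p) (map ((*) a) us) = ilist (\<lambda>t. G (a * t)) p us"
  by (induction us arbitrary: p) (auto simp: right_diff_distrib)

lemma ilist_cong:
  "sorted_wrt (<) (p # us) \<Longrightarrow> (\<And>t. t > 0 \<Longrightarrow> F t = F' t) \<Longrightarrow> ilist F p us = ilist F' p us"
  by (induction us arbitrary: p) auto

lemma thin_vec_sel_psum:
  "thin_vec c (sel us ts (psum ds)) = map_pmf (sel us ts \<circ> psum) (ithin c ds)"
proof -
  have "thin_vec c (sel us ts (psum ds)) = map_pmf (\<lambda>zs. map (\<lambda>x. cnt x zs) (sel us ts (psum ds))) (bern_list c (sum_list ds))"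
    by (rule thin_vec_N[OF sel_le[OF psum_le]])
  also have "\<dots> = map_pmf (\<lambda>zs. sel us ts (map (\<lambda>x. cnt x zs) (psum ds))) (bern_list c (sum_list ds))"
    by (simp add: sel_map)
  also have "\<dots> = map_pmf (sel us ts) (map_pmf (\<lambda>zs. map (\<lambda>x. cnt x zs) (psum ds)) (bern_list c (sum_list ds)))"
    by (simp add: pmf.map_comp o_def)
  also have "\<dots> = map_pmf (sel us ts \<circ> psum) (ithin c ds)"
    by (simp add: thin_psum pmf.map_comp)
  finally show ?thesis .
qed

lemma thin_vec_single: "thin_vec c [x] = map_pmf (\<lambda>y. [y]) (thin1 c x)"
  by (simp add: thin_vec_N[of "[x]" x] thin1_def pmf.map_comp o_def)

context levy
begin

lemma G0: "G 0 = return_pmf 0"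
proof -
  have "measure_pmf (G 0) = distr M (count_space UNIV) (X 0)" by (simp add: G_eq)
  also have "\<dots> = distr M (count_space UNIV) (\<lambda>_. 0)"
    by (rule distr_cong_AE[OF refl refl X0]) (auto intro: meas)
  also have "\<dots> = measure_pmf (return_pmf 0)"
    by (simp add: return_pmf.rep_eq)
  finally show ?thesis using measure_pmf_inject by blast
qed

lemma G_add:
  assumes "0 < t" "0 < u"
  shows "G (t + u) = map_pmf (\<lambda>(x, y). x + y) (pair_pmf (G t) (G u))"
proof -
  have sorted: "sorted_wrt (<) (0 # [t, t + u])" using assms by auto
  have "measure_pmf (G (t + u)) = distr M (count_space UNIV) (\<lambda>\<omega>. (map (\<lambda>v. X v \<omega>) [t, t + u]) ! 1)"
    using assms by (simp add: G_eq)
  also have "\<dots> = measure_pmf (map_pmf ((\<lambda>l. l ! 1) \<circ> psum) (ilist G 0 [t, t + u]))"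
    by (rule distr_map_ilist[OF sorted])
  also have "map_pmf ((\<lambda>l. l ! 1) \<circ> psum) (ilist G 0 [t, t + u]) = map_pmf (\<lambda>(x, y). x + y) (pair_pmf (G t) (G u))"
    by (simp add: pair_return_pmf2 pair_map_pmf2 pmf.map_comp o_def case_prod_unfold)
  finally show ?thesis using measure_pmf_inject by blast
qed

definition phi :: "real \<Rightarrow> real \<Rightarrow> real" where
  "phi t s = pgf (measure_pmf (G t)) s"

lemma phi_mult:
  assumes "0 \<le> t" "0 \<le> u" "\<bar>s\<bar> \<le> 1"
  shows "phi (t + u) s = phi t s * phi u s"
proof (cases "t = 0 \<or> u = 0")
  case True
  then show ?thesis by (auto simp: phi_def G0)
next
  case False
  then have "0 < t" "0 < u" using assms by auto
  show ?thesis unfolding phi_def G_add[OF \<open>0 < t\<close> \<open>0 < u\<close>] by (rule pgf_pair_sum[OF assms(3)])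
qed

lemma phi_bnd: "0 \<le> s \<Longrightarrow> s \<le> 1 \<Longrightarrow> 0 \<le> phi t s \<and> phi t s \<le> 1"
  unfolding phi_def by (simp add: pgf_nonneg pgf_le1)

lemma phi_exp:
  assumes "0 \<le> s" "s \<le> 1" "phi 1 s > 0" "0 \<le> t"
  shows "phi t s = phi 1 s powr t"
  by (rule mult_exp[where g="\<lambda>t. phi t s"]) (use assms phi_mult phi_bnd in auto)

lemma phi_zero:
  assumes "0 \<le> s" "s \<le> 1" "phi 1 s = 0" "0 < t"
  shows "phi t s = 0"
  by (rule mult_zero[where g="\<lambda>t. phi t s"]) (use assms phi_mult phi_bnd in auto)

end

context levy
begin

lemma fdd_single: "0 \<le> t \<Longrightarrow> fdd M X [t] = measure_pmf (map_pmf (\<lambda>x. [x]) (G t))"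
proof -
  assume t: "0 \<le> t"
  have "fdd M X [t] = distr M (count_space UNIV) ((\<lambda>x. [x]) \<circ> X t)"
    by (simp add: fdd_def o_def)
  also have "\<dots> = distr (distr M (count_space UNIV) (X t)) (count_space UNIV) (\<lambda>x. [x])"
    by (rule distr_distr[symmetric]) (use t meas in auto)
  also have "\<dots> = measure_pmf (map_pmf (\<lambda>x. [x]) (G t))"
    by (simp add: G_eq[OF t] map_pmf_rep_eq)
  finally show ?thesis .
qed

lemma bind_thin_vec:
  "measure_pmf (map_pmf F p) \<bind> (\<lambda>xs. measure_pmf (thin_vec c xs)) = measure_pmf (bind_pmf p (\<lambda>x. thin_vec c (F x)))"
  by (simp add: measure_pmf_bind[symmetric] bind_map_pmf)

theorem main_iff:
  assumes a0: "0 < a" and a1: "a < 1" and al: "0 < \<alpha>" and bdef: "b = a powr (1 / \<alpha>)"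
  shows "semi_selfsimilar M X a (1 / \<alpha>) \<longleftrightarrow> discrete_semistable a b (distr M (count_space UNIV) (X 1))"
proof -
  have b0: "0 < b" using bdef a0 by simp
  have b1: "b < 1"
  proof -
    have "a powr (1 / \<alpha>) < 1 powr (1 / \<alpha>)" using a0 a1 al by (intro powr_less_mono2) auto
    then show ?thesis using bdef by simp
  qed
  have D1: "distr M (count_space UNIV) (X 1) = measure_pmf (G 1)" by (simp add: G_eq)
  have rng: "0 < 1 - b + b * s \<and> 1 - b + b * s \<le> 1" if "0 \<le> s" "s \<le> 1" for s
  proof -
    have "b * s \<le> b" using that b0 by (simp add: mult_left_le)
    moreover have "0 \<le> b * s" using that b0 by simp
    ultimately show ?thesis using b1 by linarith
  qed
  have thin_pgf: "pgf (measure_pmf (bind_pmf p (thin1 b))) s = pgf (measure_pmf p) (1 - b + b * s)"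
    if "0 \<le> s" "s \<le> 1" for p s
    using that b0 b1 by (intro pgf_bind_thin1) auto
  show ?thesis
  proof
    assume sss: "semi_selfsimilar M X a (1 / \<alpha>)"
    have "fdd M X (map ((*) a) [1]) = fdd M X [1] \<bind> (\<lambda>xs. measure_pmf (thin_vec b xs))"
      using spec[OF sss[unfolded semi_selfsimilar_def], of "[1]"] bdef by simp
    then have "measure_pmf (map_pmf (\<lambda>x. [x]) (G a)) = measure_pmf (bind_pmf (G 1) (\<lambda>x. thin_vec b [x]))"
      using a0 by (simp add: fdd_single bind_thin_vec)
    also have "bind_pmf (G 1) (\<lambda>x. thin_vec b [x]) = map_pmf (\<lambda>x. [x]) (bind_pmf (G 1) (thin1 b))"
      by (simp add: thin_vec_single map_bind_pmf)
    finally have "map_pmf (\<lambda>x. [x]) (G a) = map_pmf (\<lambda>x. [x]) (bind_pmf (G 1) (thin1 b))"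
      using measure_pmf_inject by blast
    then have "map_pmf hd (map_pmf (\<lambda>x. [x]) (G a)) = map_pmf hd (map_pmf (\<lambda>x. [x]) (bind_pmf (G 1) (thin1 b)))"
      by simp
    then have Ga: "G a = bind_pmf (G 1) (thin1 b)"
      by (simp add: pmf.map_comp o_def)
    have phia: "phi a s = phi 1 (1 - b + b * s)" if "0 \<le> s" "s \<le> 1" for s
      unfolding phi_def Ga using thin_pgf[OF that] by simp
    have pos: "phi 1 s > 0" if "0 \<le> s" "s \<le> 1" for s
    proof (cases "s = 0")
      case False
      then show ?thesis using that unfolding phi_def by (intro pgf_pos) auto
    next
      case True
      show ?thesis
      proof (rule ccontr)
        assume "\<not> phi 1 s > 0"
        moreover have "0 \<le> phi 1 s" using phi_bnd[of s 1] that by simp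
        ultimately have "phi 1 s = 0" by linarith
        then have "phi 1 0 = 0" using True by simp
        have "phi a 0 = 0" by (rule phi_zero[OF _ _ \<open>phi 1 0 = 0\<close> a0]) auto
        moreover have "phi a 0 > 0"
        proof -
          have r0: "0 < 1 - b + b * 0" "1 - b + b * 0 \<le> 1" using rng[of 0] by auto
          have "phi 1 (1 - b + b * 0) > 0" unfolding phi_def by (rule pgf_pos[OF r0])
          then show ?thesis using phia[of 0] by simp
        qed
        ultimately show False by simp
      qed
    qed
    show "discrete_semistable a b (distr M (count_space UNIV) (X 1))"
      unfolding discrete_semistable_def D1
    proof (intro ballI conjI)
      fix s :: real assume "s \<in> {0..1}"
      then have s: "0 \<le> s" "s \<le> 1" by auto
      show "pgf (measure_pmf (G 1)) s \<noteq> 0" using pos[OF s] unfolding phi_def by linarith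
      have "phi a s = phi 1 s powr a" by (rule phi_exp[OF s pos[OF s]]) (use a0 in linarith)
      then have e: "phi 1 s powr a = phi 1 (1 - b + b * s)" using phia[OF s] by linarith
      then show "pgf (measure_pmf (G 1)) s powr a = pgf (measure_pmf (G 1)) (1 - b + b * s)"
        unfolding phi_def .
    qed
  next
    assume ds: "discrete_semistable a b (distr M (count_space UNIV) (X 1))"
    have pos1: "phi 1 s > 0" if "0 \<le> s" "s \<le> 1" for s
    proof -
      have "pgf (measure_pmf (G 1)) s \<noteq> 0" using ds that unfolding discrete_semistable_def D1 by auto
      moreover have "0 \<le> phi 1 s" using phi_bnd[OF that, of 1] by simp
      ultimately show ?thesis unfolding phi_def by linarith
    qed
    have ss: "phi 1 s powr a = phi 1 (1 - b + b * s)" if "0 \<le> s" "s \<le> 1" for s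
      using ds that unfolding discrete_semistable_def D1 phi_def by auto
    have Gat: "G (a * t) = bind_pmf (G t) (thin1 b)" if t: "0 < t" for t
    proof (rule pgf_unique)
      fix s :: real assume s: "0 \<le> s" "s \<le> 1"
      have r: "0 \<le> 1 - b + b * s" "1 - b + b * s \<le> 1" using rng[OF s] by auto
      have "pgf (measure_pmf (G (a * t))) s = phi 1 s powr (a * t)"
        using phi_exp[OF s pos1[OF s], of "a * t"] a0 t by (simp add: phi_def)
      also have "\<dots> = (phi 1 s powr a) powr t" by (simp add: powr_powr)
      also have "\<dots> = phi 1 (1 - b + b * s) powr t" using ss[OF s] by simp
      also have "\<dots> = phi t (1 - b + b * s)"
        using phi_exp[OF r pos1[OF r], of t] t by simp
      also have "\<dots> = pgf (measure_pmf (bind_pmf (G t) (thin1 b))) s"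
        using thin_pgf[OF s] by (simp add: phi_def)
      finally show "pgf (measure_pmf (G (a * t))) s = pgf (measure_pmf (bind_pmf (G t) (thin1 b))) s" .
    qed
    show "semi_selfsimilar M X a (1 / \<alpha>)"
      unfolding semi_selfsimilar_def
    proof (intro allI impI)
      fix ts :: "real list" assume nn: "\<forall>t\<in>set ts. 0 \<le> t"
      define us where "us = sorted_list_of_set {t\<in>set ts. 0 < t}"
      have sorted: "sorted_wrt (<) (0 # us)" unfolding us_def by (rule sorted_us[OF nn])
      have nn': "\<forall>t\<in>set (map ((*) a) ts). 0 \<le> t" using nn a0 by auto
      have injm: "inj ((*) a)" using a0 by (auto simp: inj_def)
      have us': "sorted_list_of_set {t\<in>set (map ((*) a) ts). 0 < t} = map ((*) a) us"
      proof (rule strict_sorted_equal[symmetric])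
        show "sorted_wrt (<) (sorted_list_of_set {t\<in>set (map ((*) a) ts). 0 < t})"
          by (simp add: strict_sorted_list_of_set)
        have "sorted_wrt (<) us" using sorted by simp
        then show "sorted_wrt (<) (map ((*) a) us)"
          using a0 by (simp add: sorted_wrt_map)
        have e1: "set us = {t\<in>set ts. 0 < t}" unfolding us_def by simp
        have e2: "set (sorted_list_of_set {t\<in>set (map ((*) a) ts). 0 < t}) = {t\<in>set (map ((*) a) ts). 0 < t}"
          by simp
        have e3: "{t\<in>set (map ((*) a) ts). 0 < t} = (*) a ` {t\<in>set ts. 0 < t}"
        proof (intro equalityI subsetI)
          fix x assume "x \<in> {t\<in>set (map ((*) a) ts). 0 < t}"
          then obtain t where "t \<in> set ts" "x = a * t" "0 < a * t" by auto
          moreover then have "0 < t" using a0 by (simp add: zero_less_mult_iff)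
          ultimately show "x \<in> (*) a ` {t\<in>set ts. 0 < t}" by blast
        next
          fix x assume "x \<in> (*) a ` {t\<in>set ts. 0 < t}"
          then obtain t where "t \<in> set ts" "x = a * t" "0 < t" by auto
          then show "x \<in> {t\<in>set (map ((*) a) ts). 0 < t}" using a0 by simp
        qed
        show "set (map ((*) a) us) = set (sorted_list_of_set {t\<in>set (map ((*) a) ts). 0 < t})"
        proof -
          have "set (map ((*) a) us) = (*) a ` {t\<in>set ts. 0 < t}" by (simp only: set_map e1)
          then show ?thesis by (rule trans[OF _ trans[OF e2 e3, symmetric]])
        qed
      qed
      have "fdd M X (map ((*) a) ts) = measure_pmf (map_pmf (sel (map ((*) a) us) (map ((*) a) ts) \<circ> psum) (ilist G 0 (map ((*) a) us)))"
        using fdd_repr[OF nn'] us' by simp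
      also have "ilist G 0 (map ((*) a) us) = ilist (\<lambda>t. G (a * t)) 0 us"
        using ilist_scale[of G a 0 us] by simp
      also have "\<dots> = ilist (\<lambda>t. bind_pmf (G t) (thin1 b)) 0 us"
        by (rule ilist_cong[OF sorted]) (simp add: Gat)
      also have "\<dots> = bind_pmf (ilist G 0 us) (ithin b)"
        by (rule ithin_bind[symmetric])
      also have "sel (map ((*) a) us) (map ((*) a) ts) = sel us ts"
        by (rule ext) (rule sel_scale[OF injm])
      finally have L: "fdd M X (map ((*) a) ts) = measure_pmf (map_pmf (sel us ts \<circ> psum) (bind_pmf (ilist G 0 us) (ithin b)))" .
      have "fdd M X ts \<bind> (\<lambda>xs. measure_pmf (thin_vec (a powr (1 / \<alpha>)) xs))
          = measure_pmf (bind_pmf (ilist G 0 us) (\<lambda>ds. thin_vec b ((sel us ts \<circ> psum) ds)))"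
        unfolding fdd_repr[OF nn] us_def[symmetric] bdef[symmetric] by (rule bind_thin_vec)
      also have "\<dots> = measure_pmf (map_pmf (sel us ts \<circ> psum) (bind_pmf (ilist G 0 us) (ithin b)))"
        by (simp add: thin_vec_sel_psum map_bind_pmf)
      finally show "fdd M X (map ((*) a) ts) = fdd M X ts \<bind> (\<lambda>xs. measure_pmf (thin_vec (a powr (1 / \<alpha>)) xs))"
        using L by simp
    qed
  qed
qed

end

theorem theorem2p2:
  fixes M :: "'a measure" and X :: "real \<Rightarrow> 'a \<Rightarrow> nat" and a \<alpha> b :: real
  assumes "prob_space M"
    and "0 < a" and "a < 1"
    and "0 < \<alpha>" and "\<alpha> \<le> 1"
    and "b = a powr (1 / \<alpha>)"
    and "levy_process M X"
  shows "semi_selfsimilar M X a (1 / \<alpha>) \<longleftrightarrow>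
         discrete_semistable a b (distr M (count_space UNIV) (X 1))"
proof -
  interpret levy M X using assms(1,7) by (simp add: levy_def levy_axioms_def)
  show ?thesis using assms(2-6) by (intro main_iff) auto
qed

end
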